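(* Let $X,Y$ be topological spaces, $U$ an abelian group, $f\colon[X,Y]\to U$ a map, and $\bar f\colon\mathbb Z[[X,Y]]\to U$ the homomorphism with $\bar f(e_w)=f(w)$. For $r\in\mathbb N$, the condition $\operatorname{ord}f\le r$ is equivalent to: $\bar f([A])=0$ for every $A\in\mathbb Z[C(X,Y)]$ with $\theta(A)>r$.
   Context: $\mathbb Z[S]$ is the free abelian group on a set $S$ with basis $e_x$. For $A=\sum m_ae_a\in\mathbb Z[C(X,Y)]$, $[A]=\sum m_ae_{[a]}\in\mathbb Z[[X,Y]]$, $A|_V=\sum m_ae_{a|_V}$, and $\theta(A)=\inf\{\#V:V\subset X\text{ finite},A|_V\ne0\}$. Order: let $E_r$ be the group of functions $(X\times Y)^r\to\mathbb Z$, $I_r(a)$ the characteristic function of $\Gamma_a^r$ ($\Gamma_a$ the graph of $a$), $D_r\subset E_r$ the subgroup generated by all $I_r(a)$; $\operatorname{ord}f$ is the infimum of $r\in\mathbb N$ such that there is a homomorphism $l\colon D_r\to U$ with $f([a])=l(I_r(a))$ for all $a\in C(X,Y)$. *)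

theory Defs
  imports "HOL-Analysis.Analysis"
begin

text \<open>Free abelian group Z[S]: finitely supported integer-valued functions with support in S.\<close>
definition ZZ :: "'s set \<Rightarrow> ('s \<Rightarrow> int) set" where
  "ZZ S = {A. finite {x. A x \<noteq> 0} \<and> {x. A x \<noteq> 0} \<subseteq> S}"

text \<open>Push-forward of a formal sum along a map g: sum m_a e_a |-> sum m_a e_(g a).\<close>
definition push :: "('s \<Rightarrow> 't) \<Rightarrow> ('s \<Rightarrow> int) \<Rightarrow> ('t \<Rightarrow> int)" where
  "push g A = (\<lambda>y. \<Sum>x | A x \<noteq> 0 \<and> g x = y. A x)"

definition zsmult :: "int \<Rightarrow> 'u::ab_group_add \<Rightarrow> 'u" where
  "zsmult k u = (if 0 \<le> k then (\<Sum>i<nat k. u) else - (\<Sum>i<nat (- k). u))"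

text \<open>C(X,Y): continuous maps, normalised to be extensional on the underlying space.\<close>
definition CM :: "'a topology \<Rightarrow> 'b topology \<Rightarrow> ('a \<Rightarrow> 'b) set" where
  "CM X Y = {a. continuous_map X Y a \<and> a \<in> extensional (topspace X)}"

definition hcls :: "'a topology \<Rightarrow> 'b topology \<Rightarrow> ('a \<Rightarrow> 'b) \<Rightarrow> ('a \<Rightarrow> 'b) set" where
  "hcls X Y a = {b \<in> CM X Y. homotopic_with (\<lambda>_. True) X Y a b}"

definition HC :: "'a topology \<Rightarrow> 'b topology \<Rightarrow> ('a \<Rightarrow> 'b) set set" where
  "HC X Y = hcls X Y ` CM X Y"

definition fbar :: "(('a \<Rightarrow> 'b) set \<Rightarrow> 'u::ab_group_add) \<Rightarrow> (('a \<Rightarrow> 'b) set \<Rightarrow> int) \<Rightarrow> 'u" where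
  "fbar f B = (\<Sum>w | B w \<noteq> 0. zsmult (B w) (f w))"

definition theta :: "'a topology \<Rightarrow> (('a \<Rightarrow> 'b) \<Rightarrow> int) \<Rightarrow> enat" where
  "theta X A = Inf {enat (card V) | V. V \<subseteq> topspace X \<and> finite V
                     \<and> push (\<lambda>a. restrict a V) A \<noteq> (\<lambda>_. 0)}"

text \<open>I_r(a): characteristic function of Gamma_a^r inside (X x Y)^r, the latter
  represented by lists of length r (value 0 elsewhere).\<close>
definition Ir :: "'a topology \<Rightarrow> nat \<Rightarrow> ('a \<Rightarrow> 'b) \<Rightarrow> (('a \<times> 'b) list \<Rightarrow> int)" where
  "Ir X r a = (\<lambda>xs. if length xs = r \<and> (\<forall>p\<in>set xs. fst p \<in> topspace X \<and> snd p = a (fst p))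
                     then 1 else 0)"

definition Dr :: "'a topology \<Rightarrow> 'b topology \<Rightarrow> nat \<Rightarrow> (('a \<times> 'b) list \<Rightarrow> int) set" where
  "Dr X Y r = {\<phi>. \<exists>A\<in>ZZ (CM X Y). \<phi> = (\<lambda>xs. \<Sum>a | A a \<noteq> 0. A a * Ir X r a xs)}"

definition ordf :: "'a topology \<Rightarrow> 'b topology \<Rightarrow> (('a \<Rightarrow> 'b) set \<Rightarrow> 'u::ab_group_add) \<Rightarrow> enat" where
  "ordf X Y f = Inf {enat r | r. \<exists>l :: (('a \<times> 'b) list \<Rightarrow> int) \<Rightarrow> 'u.
       (\<forall>\<phi>\<in>Dr X Y r. \<forall>\<psi>\<in>Dr X Y r. l (\<lambda>xs. \<phi> xs + \<psi> xs) = l \<phi> + l \<psi>)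
     \<and> (\<forall>a\<in>CM X Y. f (hcls X Y a) = l (Ir X r a))}"

end

theory Submission
  imports Defs
begin


lemma zsmult_0[simp]: "zsmult 0 u = 0" by (simp add: zsmult_def)
lemma zsmult_1[simp]: "zsmult 1 u = u" by (simp add: zsmult_def)

lemma zsmult_plus1: "zsmult (k+1) u = zsmult k u + u"
proof (cases "0 \<le> k")
  case True
  then have "nat (k+1) = Suc (nat k)" by simp
  then show ?thesis using True by (simp add: zsmult_def)
next
  case False
  show ?thesis
  proof (cases "k = -1")
    case True then show ?thesis by (simp add: zsmult_def)
  next
    case f2: False
    then have "nat (-k) = Suc (nat (-(k+1)))" using False by simp
    then show ?thesis using False f2 by (simp add: zsmult_def)
  qed
qed

lemma zsmult_add: "zsmult (k+m) u = zsmult k u + zsmult m u"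
proof (induct m rule: int_induct[where k=0])
  case base then show ?case by simp
next
  case (step1 i) then show ?case
    by (metis add.assoc zsmult_plus1)
next
  case (step2 i)
  have "zsmult (k + i) u = zsmult (k+(i-1)) u + u"
    using zsmult_plus1[of "k+(i-1)" u] by simp
  moreover have "zsmult i u = zsmult (i-1) u + u"
    using zsmult_plus1[of "i-1" u] by simp
  ultimately show ?case using step2 by (simp add: algebra_simps)
qed

lemma zsmult_sum: "finite T \<Longrightarrow> zsmult (\<Sum>t\<in>T. g t) u = (\<Sum>t\<in>T. zsmult (g t) u)"
  by (induct T rule: finite_induct) (auto simp: zsmult_add)

lemma sum_supp:
  assumes "finite T" "{x. A x \<noteq> 0} \<subseteq> T" "\<And>x. A x = 0 \<Longrightarrow> h x = 0"
  shows "(\<Sum>x | A x \<noteq> 0. h x) = sum h T"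
  by (rule sum.mono_neutral_left) (use assms in auto)

definition G :: "('s \<Rightarrow> 'u::ab_group_add) \<Rightarrow> ('s \<Rightarrow> int) \<Rightarrow> 'u" where
  "G u A = (\<Sum>a | A a \<noteq> 0. zsmult (A a) (u a))"

lemma G_on: "finite T \<Longrightarrow> {x. A x \<noteq> 0} \<subseteq> T \<Longrightarrow> G u A = (\<Sum>a\<in>T. zsmult (A a) (u a))"
  unfolding G_def by (rule sum_supp) auto

lemma G_add:
  assumes "finite {x. A x \<noteq> 0}" "finite {x. B x \<noteq> 0}"
  shows "G u (\<lambda>x. A x + B x) = G u A + G u B"
proof -
  let ?T = "{x. A x \<noteq> 0} \<union> {x. B x \<noteq> 0}"
  have "G u (\<lambda>x. A x + B x) = (\<Sum>a\<in>?T. zsmult (A a + B a) (u a))"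
    by (rule G_on) (use assms in auto)
  also have "\<dots> = (\<Sum>a\<in>?T. zsmult (A a) (u a)) + (\<Sum>a\<in>?T. zsmult (B a) (u a))"
    by (simp add: zsmult_add sum.distrib)
  also have "\<dots> = G u A + G u B"
    using G_on[of ?T A u] G_on[of ?T B u] assms by auto
  finally show ?thesis .
qed

lemma G_single: "G u (\<lambda>x. if x = a then k else 0) = zsmult k (u a)"
  by (subst G_on[of "{a}"]) auto

lemma FB:
  assumes fin: "finite {x. A x \<noteq> 0}"
  shows "fbar f (push g A) = G (\<lambda>a. f (g a)) A"
proof -
  let ?S = "{x. A x \<noteq> 0}"
  have pw: "push g A w = (\<Sum>x\<in>{x. x \<in> ?S \<and> g x = w}. A x)" for w
    unfolding push_def by simp
  have "fbar f (push g A) = (\<Sum>w\<in>g ` ?S. zsmult (push g A w) (f w))"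
    unfolding fbar_def
  proof (rule sum_supp)
    show "{x. push g A x \<noteq> 0} \<subseteq> g ` ?S"
    proof
      fix w assume "w \<in> {x. push g A x \<noteq> 0}"
      then have "{x. x \<in> ?S \<and> g x = w} \<noteq> {}"
      proof (rule contrapos_pp)
        assume "\<not> {x. x \<in> ?S \<and> g x = w} \<noteq> {}"
        then have eq: "{x. x \<in> ?S \<and> g x = w} = {}" by blast
        have "push g A w = 0" unfolding pw eq by simp
        then show "w \<notin> {x. push g A x \<noteq> 0}" by simp
      qed
      then show "w \<in> g ` ?S" by auto
    qed
  qed (use fin in auto)
  also have "\<dots> = (\<Sum>w\<in>g ` ?S. \<Sum>x\<in>{x. x \<in> ?S \<and> g x = w}. zsmult (A x) (f (g x)))"
    unfolding pw using fin by (auto intro!: sum.cong simp: zsmult_sum)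
  also have "\<dots> = (\<Sum>x\<in>?S. zsmult (A x) (f (g x)))"
    by (rule sum.group) (use fin in auto)
  also have "\<dots> = G (\<lambda>a. f (g a)) A" unfolding G_def by simp
  finally show ?thesis .
qed



definition phi :: "'a topology \<Rightarrow> nat \<Rightarrow> (('a \<Rightarrow> 'b) \<Rightarrow> int) \<Rightarrow> (('a \<times> 'b) list \<Rightarrow> int)" where
  "phi X r A = (\<lambda>xs. \<Sum>a | A a \<noteq> 0. A a * Ir X r a xs)"

lemma Dr_eq: "Dr X Y r = phi X r ` ZZ (CM X Y)"
  unfolding Dr_def phi_def by auto

lemma theta_gt: "enat r < theta X A \<longleftrightarrow>
   (\<forall>V. V \<subseteq> topspace X \<and> finite V \<and> card V \<le> r \<longrightarrow> push (\<lambda>a. restrict a V) A = (\<lambda>_. 0))"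
proof
  assume a: "enat r < theta X A"
  show "\<forall>V. V \<subseteq> topspace X \<and> finite V \<and> card V \<le> r \<longrightarrow> push (\<lambda>a. restrict a V) A = (\<lambda>_. 0)"
  proof (intro allI impI, rule ccontr)
    fix V assume v: "V \<subseteq> topspace X \<and> finite V \<and> card V \<le> r" and n: "push (\<lambda>a. restrict a V) A \<noteq> (\<lambda>_. 0)"
    have "theta X A \<le> enat (card V)" unfolding theta_def
      by (rule Inf_lower) (use v n in auto)
    also have "\<dots> \<le> enat r" using v by simp
    finally show False using a by simp
  qed
next
  assume a: "\<forall>V. V \<subseteq> topspace X \<and> finite V \<and> card V \<le> r \<longrightarrow> push (\<lambda>a. restrict a V) A = (\<lambda>_. 0)"
  have "enat (Suc r) \<le> theta X A" unfolding theta_def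
  proof (rule Inf_greatest)
    fix z assume "z \<in> {enat (card V) | V. V \<subseteq> topspace X \<and> finite V
                     \<and> push (\<lambda>a. restrict a V) A \<noteq> (\<lambda>_. 0)}"
    then obtain V where "z = enat (card V)" "V \<subseteq> topspace X" "finite V" "push (\<lambda>a. restrict a V) A \<noteq> (\<lambda>_. 0)"
      by blast
    then show "enat (Suc r) \<le> z" using a by force
  qed
  then show "enat r < theta X A" using Suc_ile_eq by blast
qed

lemma phi_eval:
  assumes "length xs = r" "\<forall>p\<in>set xs. fst p \<in> topspace X" and fin: "finite {x. A x \<noteq> 0}"
  shows "phi X r A xs = sum A {a. A a \<noteq> 0 \<and> (\<forall>p\<in>set xs. snd p = a (fst p))}"
proof -
  have "phi X r A xs = (\<Sum>a | A a \<noteq> 0. if (\<forall>p\<in>set xs. snd p = a (fst p)) then A a else 0)"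
    unfolding phi_def Ir_def using assms by (intro sum.cong) auto
  also have "\<dots> = sum A {a. A a \<noteq> 0 \<and> (\<forall>p\<in>set xs. snd p = a (fst p))}"
    using sum.inter_filter[OF fin, of A "\<lambda>a. \<forall>p\<in>set xs. snd p = a (fst p)"] by simp
  finally show ?thesis .
qed

lemma phi_eval0:
  assumes "\<not> (length xs = r \<and> (\<forall>p\<in>set xs. fst p \<in> topspace X))"
  shows "phi X r A xs = 0"
proof -
  have "\<And>a. Ir X r a xs = 0" unfolding Ir_def using assms by auto
  then show ?thesis unfolding phi_def by simp
qed

lemma lemE:
  assumes fin: "finite {x. A x \<noteq> 0}"
    and th: "\<forall>V. V \<subseteq> topspace X \<and> finite V \<and> card V \<le> r \<longrightarrow> push (\<lambda>a. restrict a V) A = (\<lambda>_. 0)"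
  shows "phi X r A = (\<lambda>_. 0)"
proof
  fix xs
  show "phi X r A xs = 0"
  proof (cases "length xs = r \<and> (\<forall>p\<in>set xs. fst p \<in> topspace X)")
    case False then show ?thesis by (rule phi_eval0)
  next
    case True
    let ?P = "\<lambda>a. \<forall>p\<in>set xs. snd p = a (fst p)"
    have e: "phi X r A xs = sum A {a. A a \<noteq> 0 \<and> ?P a}" using True fin by (intro phi_eval) auto
    show ?thesis
    proof (cases "\<exists>a1. ?P a1")
      case False
      then have emp: "{a. A a \<noteq> 0 \<and> ?P a} = {}" by blast
      show ?thesis unfolding e emp by simp
    next
      case True2: True
      then obtain a1 where a1: "?P a1" by blast
      define V where "V = fst ` set xs"
      have V: "V \<subseteq> topspace X" "finite V" "card V \<le> r"
        using True unfolding V_def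
        by (auto intro: order_trans[OF card_image_le] simp: card_length)
      have "\<And>a. ?P a \<longleftrightarrow> restrict a V = restrict a1 V"
      proof -
        fix a
        have "?P a \<longleftrightarrow> (\<forall>x\<in>V. a x = a1 x)" using a1 unfolding V_def by force
        also have "\<dots> \<longleftrightarrow> restrict a V = restrict a1 V" by (metis restrict_ext restrict_apply')
        finally show "?P a \<longleftrightarrow> restrict a V = restrict a1 V" .
      qed
      then have "sum A {a. A a \<noteq> 0 \<and> ?P a} = push (\<lambda>a. restrict a V) A (restrict a1 V)"
        unfolding push_def by simp
      also have "\<dots> = 0" using th V by simp
      finally show ?thesis using e by simp
    qed
  qed
qed



lemma lemH1:
  assumes fin: "finite {x. A x \<noteq> 0}" and z: "phi X r A = (\<lambda>_. 0)"
    and V: "V \<noteq> {}" "finite V" "V \<subseteq> topspace X" "card V \<le> r"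
  shows "push (\<lambda>a. restrict a V) A = (\<lambda>_. 0)"
proof
  fix b
  show "push (\<lambda>a. restrict a V) A b = 0"
  proof (cases "\<exists>a1. restrict a1 V = b")
    case False
    then have emp: "{a. A a \<noteq> 0 \<and> restrict a V = b} = {}" by blast
    show ?thesis unfolding push_def emp by simp
  next
    case True
    then obtain a1 where a1: "restrict a1 V = b" by blast
    obtain ys where ys: "set ys = V" "distinct ys" using finite_distinct_list[OF V(2)] by blast
    have ly: "length ys = card V" using ys distinct_card by fastforce
    have yne: "ys \<noteq> []" using ys V by auto
    define xs where "xs = ys @ replicate (r - length ys) (hd ys)"
    have sx: "set xs = V" unfolding xs_def using ys yne by (auto simp: hd_in_set)
    have lx: "length xs = r" unfolding xs_def using ly V by simp
    define zs where "zs = map (\<lambda>x. (x, a1 x)) xs"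
    have lz: "length zs = r" unfolding zs_def using lx by simp
    have tz: "\<forall>p\<in>set zs. fst p \<in> topspace X" unfolding zs_def using sx V by auto
    have P: "(\<forall>p\<in>set zs. snd p = a (fst p)) \<longleftrightarrow> restrict a V = b" for a
    proof -
      have "(\<forall>p\<in>set zs. snd p = a (fst p)) \<longleftrightarrow> (\<forall>x\<in>V. a x = a1 x)"
        unfolding zs_def using sx by auto
      also have "\<dots> \<longleftrightarrow> restrict a V = restrict a1 V" by (metis restrict_ext restrict_apply')
      finally show ?thesis using a1 by simp
    qed
    have "0 = phi X r A zs" using z by simp
    also have "\<dots> = sum A {a. A a \<noteq> 0 \<and> (\<forall>p\<in>set zs. snd p = a (fst p))}"
      by (rule phi_eval[OF lz tz fin])
    also have "\<dots> = push (\<lambda>a. restrict a V) A b" unfolding push_def P by simp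
    finally show ?thesis by simp
  qed
qed

lemma lemG0:
  assumes fin: "finite {x. A x \<noteq> 0}" and z: "push g A = (\<lambda>_. 0)"
  shows "sum A {x. A x \<noteq> 0} = 0"
proof -
  let ?S = "{x. A x \<noteq> 0}"
  have "sum A ?S = (\<Sum>w\<in>g ` ?S. sum A {x. x \<in> ?S \<and> g x = w})"
    by (rule sum.group[symmetric]) (use fin in auto)
  also have "\<dots> = (\<Sum>w\<in>g ` ?S. push g A w)" unfolding push_def by simp
  also have "\<dots> = 0" using z by simp
  finally show ?thesis .
qed

lemma push_empty:
  assumes "sum A {x. A x \<noteq> 0} = 0"
  shows "push (\<lambda>a. restrict a {}) A = (\<lambda>_. 0)"
proof
  fix b
  have r: "restrict a {} = (\<lambda>_. undefined)" for a :: "'c \<Rightarrow> 'd" by auto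
  show "push (\<lambda>a. restrict a {}) A b = 0"
  proof (cases "b = (\<lambda>_. undefined)")
    case True
    then have e: "{a. A a \<noteq> 0 \<and> restrict a {} = b} = {x. A x \<noteq> 0}" using r by auto
    show ?thesis unfolding push_def e using assms by simp
  next
    case False
    then have e: "{a. A a \<noteq> 0 \<and> restrict a {} = b} = {}" using r by auto
    show ?thesis unfolding push_def e by simp
  qed
qed

lemma lemH:
  assumes fin: "finite {x. A x \<noteq> 0}" and z: "phi X r A = (\<lambda>_. 0)"
    and c: "r = 0 \<or> topspace X \<noteq> {}"
  shows "\<forall>V. V \<subseteq> topspace X \<and> finite V \<and> card V \<le> r \<longrightarrow> push (\<lambda>a. restrict a V) A = (\<lambda>_. 0)"
proof (intro allI impI)
  fix V assume V: "V \<subseteq> topspace X \<and> finite V \<and> card V \<le> r"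
  show "push (\<lambda>a. restrict a V) A = (\<lambda>_. 0)"
  proof (cases "V = {}")
    case False then show ?thesis using lemH1[OF fin z] V by blast
  next
    case True
    have "sum A {x. A x \<noteq> 0} = 0"
    proof (cases "r = 0")
      case True
      have "0 = phi X r A []" using z by simp
      also have "\<dots> = sum A {a. A a \<noteq> 0 \<and> (\<forall>p\<in>set []. snd p = a (fst p))}"
        by (rule phi_eval) (use True fin in auto)
      finally show ?thesis by simp
    next
      case False
      then obtain x0 where "x0 \<in> topspace X" using c by blast
      then have "push (\<lambda>a. restrict a {x0}) A = (\<lambda>_. 0)"
        using False by (intro lemH1[OF fin z]) auto
      then show ?thesis by (rule lemG0[OF fin])
    qed
    then show ?thesis using True push_empty by blast
  qed
qed



lemma ZZ_iff: "A \<in> ZZ S \<longleftrightarrow> finite {x. A x \<noteq> 0} \<and> {x. A x \<noteq> 0} \<subseteq> S"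
  unfolding ZZ_def by simp

lemma ZZ_add: "A \<in> ZZ S \<Longrightarrow> B \<in> ZZ S \<Longrightarrow> (\<lambda>x. A x + B x) \<in> ZZ S"
proof -
  assume a: "A \<in> ZZ S" "B \<in> ZZ S"
  have "{x. A x + B x \<noteq> 0} \<subseteq> {x. A x \<noteq> 0} \<union> {x. B x \<noteq> 0}" by auto
  then show ?thesis using a unfolding ZZ_iff by (meson finite_UnI finite_subset le_sup_iff order_trans)
qed

lemma ZZ_diff: "A \<in> ZZ S \<Longrightarrow> B \<in> ZZ S \<Longrightarrow> (\<lambda>x. A x - B x) \<in> ZZ S"
proof -
  assume a: "A \<in> ZZ S" "B \<in> ZZ S"
  have "{x. A x - B x \<noteq> 0} \<subseteq> {x. A x \<noteq> 0} \<union> {x. B x \<noteq> 0}" by auto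
  then show ?thesis using a unfolding ZZ_iff by (meson finite_UnI finite_subset le_sup_iff order_trans)
qed

lemma ZZ_single: "a \<in> S \<Longrightarrow> (\<lambda>x. if x = a then k else 0) \<in> ZZ S"
  unfolding ZZ_iff by (auto intro: finite_subset[of _ "{a}"])

lemma phi_on: "finite T \<Longrightarrow> {x. A x \<noteq> 0} \<subseteq> T \<Longrightarrow> phi X r A xs = (\<Sum>a\<in>T. A a * Ir X r a xs)"
  unfolding phi_def by (rule sum_supp) auto

lemma phi_add:
  assumes "finite {x. A x \<noteq> 0}" "finite {x. B x \<noteq> 0}"
  shows "phi X r (\<lambda>x. A x + B x) = (\<lambda>xs. phi X r A xs + phi X r B xs)"
proof
  fix xs
  let ?T = "{x. A x \<noteq> 0} \<union> {x. B x \<noteq> 0}"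
  have "phi X r (\<lambda>x. A x + B x) xs = (\<Sum>a\<in>?T. (A a + B a) * Ir X r a xs)"
    by (rule phi_on) (use assms in auto)
  also have "\<dots> = (\<Sum>a\<in>?T. A a * Ir X r a xs) + (\<Sum>a\<in>?T. B a * Ir X r a xs)"
    by (simp add: distrib_right sum.distrib)
  also have "\<dots> = phi X r A xs + phi X r B xs"
    using phi_on[of ?T A X r xs] phi_on[of ?T B X r xs] assms by auto
  finally show "phi X r (\<lambda>x. A x + B x) xs = phi X r A xs + phi X r B xs" .
qed

lemma phi_diff:
  assumes "finite {x. A x \<noteq> 0}" "finite {x. B x \<noteq> 0}"
  shows "phi X r (\<lambda>x. A x - B x) = (\<lambda>xs. phi X r A xs - phi X r B xs)"
proof
  fix xs
  let ?T = "{x. A x \<noteq> 0} \<union> {x. B x \<noteq> 0}"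
  have "phi X r (\<lambda>x. A x - B x) xs = (\<Sum>a\<in>?T. (A a - B a) * Ir X r a xs)"
    by (rule phi_on) (use assms in auto)
  also have "\<dots> = (\<Sum>a\<in>?T. A a * Ir X r a xs) - (\<Sum>a\<in>?T. B a * Ir X r a xs)"
    by (simp add: left_diff_distrib sum_subtractf)
  also have "\<dots> = phi X r A xs - phi X r B xs"
    using phi_on[of ?T A X r xs] phi_on[of ?T B X r xs] assms by auto
  finally show "phi X r (\<lambda>x. A x - B x) xs = phi X r A xs - phi X r B xs" .
qed

lemma phi_single: "phi X r (\<lambda>x. if x = a then k else 0) = (\<lambda>xs. k * Ir X r a xs)"
  by (rule ext, subst phi_on[of "{a}"]) auto

lemma phi_zero: "phi X r (\<lambda>_. 0) = (\<lambda>_. 0)"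
  unfolding phi_def by simp

lemma G_zero: "G u (\<lambda>_. 0) = 0"
  unfolding G_def by simp

lemma l_scale:
  fixes l :: "('c \<Rightarrow> int) \<Rightarrow> 'u::ab_group_add"
  assumes add: "\<forall>\<phi>\<in>D. \<forall>\<psi>\<in>D. l (\<lambda>xs. \<phi> xs + \<psi> xs) = l \<phi> + l \<psi>"
    and cl: "\<And>k. (\<lambda>xs. k * \<phi> xs) \<in> D"
  shows "l (\<lambda>xs. k * \<phi> xs) = zsmult k (l \<phi>)"
proof (induct k rule: int_induct[where k=0])
  case base
  have z: "(\<lambda>xs. (0::int) * \<phi> xs) \<in> D" by (rule cl)
  have "l (\<lambda>xs. 0 * \<phi> xs) = l (\<lambda>xs. 0 * \<phi> xs) + l (\<lambda>xs. 0 * \<phi> xs)"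
    using add z by fastforce
  then show ?case by simp
next
  case (step1 i)
  have "l (\<lambda>xs. (i+1) * \<phi> xs) = l (\<lambda>xs. i * \<phi> xs + 1 * \<phi> xs)"
    by (simp add: distrib_right)
  also have "\<dots> = l (\<lambda>xs. i * \<phi> xs) + l (\<lambda>xs. 1 * \<phi> xs)" by (rule add[rule_format, OF cl cl])
  finally show ?case using step1 by (simp add: zsmult_plus1)
next
  case (step2 i)
  have "l (\<lambda>xs. i * \<phi> xs) = l (\<lambda>xs. (i - 1) * \<phi> xs + 1 * \<phi> xs)"
    by (simp add: algebra_simps)
  also have "\<dots> = l (\<lambda>xs. (i-1) * \<phi> xs) + l (\<lambda>xs. 1 * \<phi> xs)" by (rule add[rule_format, OF cl cl])
  finally have "l (\<lambda>xs. (i-1) * \<phi> xs) = zsmult i (l \<phi>) - l \<phi>" using step2 by (simp add: algebra_simps)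
  also have "\<dots> = zsmult (i-1) (l \<phi>)" using zsmult_plus1[of "i-1" "l \<phi>"] by simp
  finally show ?case .
qed



lemma phi_in_Dr: "A \<in> ZZ (CM X Y) \<Longrightarrow> phi X r A \<in> Dr X Y r"
  unfolding Dr_eq by blast

lemma l_zero:
  assumes add: "\<forall>\<phi>\<in>Dr X Y r. \<forall>\<psi>\<in>Dr X Y r. l (\<lambda>xs. \<phi> xs + \<psi> xs) = l \<phi> + l \<psi>"
  shows "l (\<lambda>_. 0) = (0::'u::ab_group_add)"
proof -
  have z: "(\<lambda>_. 0) \<in> Dr X Y r"
    using phi_in_Dr[of "\<lambda>_. 0" X Y r] unfolding phi_zero ZZ_iff by simp
  have "l (\<lambda>xs. (\<lambda>_. 0) xs + (\<lambda>_. 0) xs) = l (\<lambda>_. 0) + l (\<lambda>_. 0)"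
    by (rule add[rule_format, OF z z])
  then show ?thesis by simp
qed

lemma l_phi:
  fixes l :: "(('a \<times> 'b) list \<Rightarrow> int) \<Rightarrow> 'u::ab_group_add"
  assumes add: "\<forall>\<phi>\<in>Dr X Y r. \<forall>\<psi>\<in>Dr X Y r. l (\<lambda>xs. \<phi> xs + \<psi> xs) = l \<phi> + l \<psi>"
    and A: "A \<in> ZZ (CM X Y)"
  shows "l (phi X r A) = G (\<lambda>a. l (Ir X r a)) A"
proof -
  have "finite T \<Longrightarrow> \<forall>A. {x. A x \<noteq> 0} = T \<and> A \<in> ZZ (CM X Y) \<longrightarrow> l (phi X r A) = G (\<lambda>a. l (Ir X r a)) A" for T
  proof (induct T rule: finite_induct)
    case empty
    show ?case
    proof (intro allI impI)
      fix A :: "('a \<Rightarrow> 'b) \<Rightarrow> int" assume "{x. A x \<noteq> 0} = {} \<and> A \<in> ZZ (CM X Y)"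
      then have "A = (\<lambda>_. 0)" by auto
      then show "l (phi X r A) = G (\<lambda>a. l (Ir X r a)) A"
        using l_zero[OF add] by (simp add: phi_zero G_zero)
    qed
  next
    case (insert a T)
    show ?case
    proof (intro allI impI)
      fix A :: "('a \<Rightarrow> 'b) \<Rightarrow> int" assume h: "{x. A x \<noteq> 0} = insert a T \<and> A \<in> ZZ (CM X Y)"
      define A' where "A' = (\<lambda>x. if x = a then 0 else A x)"
      define S where "S = (\<lambda>x. if x = a then A a else 0)"
      have aC: "a \<in> CM X Y" using h unfolding ZZ_iff by auto
      have sA': "{x. A' x \<noteq> 0} = T" using h insert(2) unfolding A'_def by auto
      have A'Z: "A' \<in> ZZ (CM X Y)" using h sA' insert(1) unfolding ZZ_iff A'_def by auto
      have SZ: "S \<in> ZZ (CM X Y)" unfolding S_def by (rule ZZ_single[OF aC])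
      have fA': "finite {x. A' x \<noteq> 0}" and fS: "finite {x. S x \<noteq> 0}"
        using A'Z SZ unfolding ZZ_iff by auto
      have AA: "A = (\<lambda>x. A' x + S x)" unfolding A'_def S_def by auto
      have cl: "(\<lambda>xs. k * Ir X r a xs) \<in> Dr X Y r" for k
        using phi_in_Dr[OF ZZ_single[OF aC, of k], of r] unfolding phi_single .
      have "l (phi X r A) = l (\<lambda>xs. phi X r A' xs + phi X r S xs)"
        unfolding AA by (simp add: phi_add[OF fA' fS])
      also have "\<dots> = l (phi X r A') + l (phi X r S)"
        by (rule add[rule_format, OF phi_in_Dr[OF A'Z] phi_in_Dr[OF SZ]])
      also have "l (phi X r S) = l (\<lambda>xs. A a * Ir X r a xs)" unfolding S_def phi_single ..
      also have "\<dots> = zsmult (A a) (l (Ir X r a))"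
        using l_scale[of "Dr X Y r" l "Ir X r a" "A a", OF add cl] by simp
      also have "\<dots> = G (\<lambda>a. l (Ir X r a)) S" unfolding S_def G_single ..
      also have "l (phi X r A') = G (\<lambda>a. l (Ir X r a)) A'" using insert(3) sA' A'Z by blast
      also have "G (\<lambda>a. l (Ir X r a)) A' + G (\<lambda>a. l (Ir X r a)) S = G (\<lambda>a. l (Ir X r a)) A"
        unfolding AA by (rule G_add[OF fA' fS, symmetric])
      finally show "l (phi X r A) = G (\<lambda>a. l (Ir X r a)) A" .
    qed
  qed
  then show ?thesis using A unfolding ZZ_iff by blast
qed



lemma G_cong: "(\<And>a. A a \<noteq> 0 \<Longrightarrow> u a = v a) \<Longrightarrow> G u A = G v A"
  unfolding G_def by (rule sum.cong) auto

theorem mainTheorem15: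
  fixes X :: "'a topology" and Y :: "'b topology"
    and f :: "('a \<Rightarrow> 'b) set \<Rightarrow> 'u::ab_group_add" and r :: nat
  shows "ordf X Y f \<le> enat r \<longleftrightarrow>
    (\<forall>A\<in>ZZ (CM X Y). theta X A > enat r \<longrightarrow> fbar f (push (hcls X Y) A) = 0)"
proof
  assume "ordf X Y f \<le> enat r"
  then have "ordf X Y f < enat (Suc r)" using le_less_trans[of _ "enat r" "enat (Suc r)"] by simp
  then obtain r' l where r': "enat r' < enat (Suc r)"
    and add: "\<forall>\<phi>\<in>Dr X Y r'. \<forall>\<psi>\<in>Dr X Y r'. l (\<lambda>xs. \<phi> xs + \<psi> xs) = l \<phi> + l \<psi>"
    and fl: "\<forall>a\<in>CM X Y. f (hcls X Y a) = l (Ir X r' a)"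
    unfolding ordf_def Inf_less_iff by blast
  have rr: "r' \<le> r" using r' by simp
  show "\<forall>A\<in>ZZ (CM X Y). theta X A > enat r \<longrightarrow> fbar f (push (hcls X Y) A) = 0"
  proof (intro ballI impI)
    fix A assume A: "A \<in> ZZ (CM X Y)" and th: "enat r < theta X A"
    have fin: "finite {x. A x \<noteq> 0}" using A unfolding ZZ_iff by simp
    have "enat r' < theta X A" using th rr by (meson enat_ord_simps(1) le_less_trans)
    then have z: "phi X r' A = (\<lambda>_. 0)" using lemE[OF fin] theta_gt by blast
    have "fbar f (push (hcls X Y) A) = G (\<lambda>a. f (hcls X Y a)) A" by (rule FB[OF fin])
    also have "\<dots> = G (\<lambda>a. l (Ir X r' a)) A"
      using A fl unfolding ZZ_iff by (intro G_cong) auto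
    also have "\<dots> = l (phi X r' A)" by (rule l_phi[OF add A, symmetric])
    also have "\<dots> = 0" unfolding z by (rule l_zero[OF add])
    finally show "fbar f (push (hcls X Y) A) = 0" .
  qed
next
  assume R: "\<forall>A\<in>ZZ (CM X Y). theta X A > enat r \<longrightarrow> fbar f (push (hcls X Y) A) = 0"
  define r0 where "r0 = (if topspace X = {} then 0 else r)"
  have r0r: "r0 \<le> r" unfolding r0_def by simp
  let ?G = "G (\<lambda>a. f (hcls X Y a))"
  have key: "?G A = 0" if A: "A \<in> ZZ (CM X Y)" and z: "phi X r0 A = (\<lambda>_. 0)" for A
  proof -
    have fin: "finite {x. A x \<noteq> 0}" using A unfolding ZZ_iff by simp
    have c: "r0 = 0 \<or> topspace X \<noteq> {}" unfolding r0_def by simp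
    have H: "\<forall>V. V \<subseteq> topspace X \<and> finite V \<and> card V \<le> r0 \<longrightarrow> push (\<lambda>a. restrict a V) A = (\<lambda>_. 0)"
      by (rule lemH[OF fin z c])
    have "\<forall>V. V \<subseteq> topspace X \<and> finite V \<and> card V \<le> r \<longrightarrow> push (\<lambda>a. restrict a V) A = (\<lambda>_. 0)"
    proof (cases "topspace X = {}")
      case True
      then show ?thesis using H by auto
    next
      case False then show ?thesis using H unfolding r0_def by simp
    qed
    then have "enat r < theta X A" using theta_gt by blast
    then have "fbar f (push (hcls X Y) A) = 0" using R A by blast
    then show ?thesis using FB[OF fin, of f "hcls X Y"] by simp
  qed
  have wd: "?G A = ?G B" if A: "A \<in> ZZ (CM X Y)" and B: "B \<in> ZZ (CM X Y)"
    and e: "phi X r0 A = phi X r0 B" for A B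
  proof -
    have fA: "finite {x. A x \<noteq> 0}" and fB: "finite {x. B x \<noteq> 0}" using A B unfolding ZZ_iff by auto
    define C where "C = (\<lambda>x. A x - B x)"
    have CZ: "C \<in> ZZ (CM X Y)" unfolding C_def by (rule ZZ_diff[OF A B])
    have fC: "finite {x. C x \<noteq> 0}" using CZ unfolding ZZ_iff by auto
    have "phi X r0 C = (\<lambda>_. 0)" unfolding C_def phi_diff[OF fA fB] e by simp
    then have "?G C = 0" by (rule key[OF CZ])
    moreover have "A = (\<lambda>x. C x + B x)" unfolding C_def by simp
    then have "?G A = ?G C + ?G B" using G_add[OF fC fB] by simp
    ultimately show ?thesis by simp
  qed
  define l where "l = (\<lambda>\<phi>. ?G (SOME A. A \<in> ZZ (CM X Y) \<and> \<phi> = phi X r0 A))"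
  have lA: "l (phi X r0 A) = ?G A" if A: "A \<in> ZZ (CM X Y)" for A
  proof -
    have ex: "\<exists>B. B \<in> ZZ (CM X Y) \<and> phi X r0 A = phi X r0 B" using A by blast
    let ?B = "SOME B. B \<in> ZZ (CM X Y) \<and> phi X r0 A = phi X r0 B"
    have bb: "?B \<in> ZZ (CM X Y) \<and> phi X r0 A = phi X r0 ?B" by (rule someI_ex[OF ex])
    have "?G A = ?G ?B" using bb by (intro wd[OF A]) auto
    then have "?G ?B = ?G A" by simp
    then show ?thesis unfolding l_def by simp
  qed
  have add: "\<forall>\<phi>\<in>Dr X Y r0. \<forall>\<psi>\<in>Dr X Y r0. l (\<lambda>xs. \<phi> xs + \<psi> xs) = l \<phi> + l \<psi>"
  proof (intro ballI)
    fix \<phi> \<psi> assume "\<phi> \<in> Dr X Y r0" "\<psi> \<in> Dr X Y r0"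
    then obtain A B where A: "A \<in> ZZ (CM X Y)" "\<phi> = phi X r0 A" and B: "B \<in> ZZ (CM X Y)" "\<psi> = phi X r0 B"
      unfolding Dr_eq by blast
    have fA: "finite {x. A x \<noteq> 0}" and fB: "finite {x. B x \<noteq> 0}" using A B unfolding ZZ_iff by auto
    have "(\<lambda>xs. \<phi> xs + \<psi> xs) = phi X r0 (\<lambda>x. A x + B x)" using A B phi_add[OF fA fB] by simp
    then have "l (\<lambda>xs. \<phi> xs + \<psi> xs) = ?G (\<lambda>x. A x + B x)" using lA ZZ_add[OF A(1) B(1)] by simp
    also have "\<dots> = ?G A + ?G B" by (rule G_add[OF fA fB])
    finally show "l (\<lambda>xs. \<phi> xs + \<psi> xs) = l \<phi> + l \<psi>" using lA A B by simp
  qed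
  have fl: "\<forall>a\<in>CM X Y. f (hcls X Y a) = l (Ir X r0 a)"
  proof
    fix a assume a: "a \<in> CM X Y"
    have "l (Ir X r0 a) = l (phi X r0 (\<lambda>x. if x = a then 1 else 0))" unfolding phi_single by simp
    also have "\<dots> = ?G (\<lambda>x. if x = a then 1 else 0)" by (rule lA[OF ZZ_single[OF a]])
    also have "\<dots> = f (hcls X Y a)" unfolding G_single by simp
    finally show "f (hcls X Y a) = l (Ir X r0 a)" by simp
  qed
  have "ordf X Y f \<le> enat r0" unfolding ordf_def
  proof (rule Inf_lower)
    have "\<exists>l. (\<forall>\<phi>\<in>Dr X Y r0. \<forall>\<psi>\<in>Dr X Y r0. l (\<lambda>xs. \<phi> xs + \<psi> xs) = l \<phi> + l \<psi>)
     \<and> (\<forall>a\<in>CM X Y. f (hcls X Y a) = l (Ir X r0 a))" by (rule exI[of _ l]) (use add fl in simp)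
    then show "enat r0 \<in> {enat r | r. \<exists>l :: (('a \<times> 'b) list \<Rightarrow> int) \<Rightarrow> 'u.
       (\<forall>\<phi>\<in>Dr X Y r. \<forall>\<psi>\<in>Dr X Y r. l (\<lambda>xs. \<phi> xs + \<psi> xs) = l \<phi> + l \<psi>)
     \<and> (\<forall>a\<in>CM X Y. f (hcls X Y a) = l (Ir X r a))}" by blast
  qed
  also have "\<dots> \<le> enat r" using r0r by simp
  finally show "ordf X Y f \<le> enat r" .
qed


end
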